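(* Fix integers $p\ge 3$, $q\ge 1$ and a real $\eta$ with $0<\eta<\frac{1}{7p^5q}$. For all sufficiently large $n$, for the graph $G$ described in the context, the set $S=\{v\in V(G): d_G(v)\le (\frac{p-1}{p}-5\eta)n\}$ satisfies $|S|\le \eta n$.
   Context: $B_{p,q}=K_p\nabla qK_1$ is the join of a clique $K_p$ and an independent set of $q$ vertices. $\mathcal{G}(n,p,q)$ is the set of $n$-vertex graphs with chromatic number greater than $p$ that contain no subgraph isomorphic to $B_{p,q}$ and have the maximum number of edges among all such graphs. $G$ is a graph in $\mathcal{G}(n,p,q)$ whose minimum degree equals $\min_{F\in\mathcal{G}(n,p,q)}\delta(F)$. $d_G(v)$ is the degree of $v$ in $G$. *)

theory Defs
  imports Complex_Main
begin

definition simple_graph :: "nat \<Rightarrow> nat set set \<Rightarrow> bool" where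
  "simple_graph n E \<longleftrightarrow> (\<forall>e\<in>E. \<exists>u v. u \<noteq> v \<and> u < n \<and> v < n \<and> e = {u, v})"

definition colorable :: "nat \<Rightarrow> nat set set \<Rightarrow> nat \<Rightarrow> bool" where
  "colorable n E k \<longleftrightarrow>
     (\<exists>c :: nat \<Rightarrow> nat. (\<forall>v<n. c v < k) \<and> (\<forall>u v. u \<noteq> v \<longrightarrow> {u, v} \<in> E \<longrightarrow> c u \<noteq> c v))"

definition chromatic_number :: "nat \<Rightarrow> nat set set \<Rightarrow> nat" where
  "chromatic_number n E = (LEAST k. colorable n E k)"

definition contains_subgraph :: "nat \<Rightarrow> nat set set \<Rightarrow> nat \<Rightarrow> nat set set \<Rightarrow> bool" where
  "contains_subgraph n E m F \<longleftrightarrow>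
     (\<exists>f. inj_on f {..<m} \<and> f ` {..<m} \<subseteq> {..<n} \<and>
          (\<forall>u v. {u, v} \<in> F \<longrightarrow> {f u, f v} \<in> E))"

text \<open>B_{p,q} = K_p join (q K_1): vertices {..<p+q}; vertices < p form the clique,
the other q vertices are independent and adjacent to every clique vertex.\<close>
definition book_edges :: "nat \<Rightarrow> nat \<Rightarrow> nat set set" where
  "book_edges p q = {{u, v} | u v. u \<noteq> v \<and> u < p + q \<and> v < p + q \<and> (u < p \<or> v < p)}"

definition degree :: "nat set set \<Rightarrow> nat \<Rightarrow> nat" where
  "degree E v = card {u. {u, v} \<in> E}"

definition min_degree :: "nat \<Rightarrow> nat set set \<Rightarrow> nat" where
  "min_degree n E = Min (degree E ` {..<n})"

definition admissible :: "nat \<Rightarrow> nat \<Rightarrow> nat \<Rightarrow> nat set set \<Rightarrow> bool" where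
  "admissible n p q E \<longleftrightarrow> simple_graph n E \<and> chromatic_number n E > p \<and>
     \<not> contains_subgraph n E (p + q) (book_edges p q)"

definition extremal_family :: "nat \<Rightarrow> nat \<Rightarrow> nat \<Rightarrow> nat set set set" where
  "extremal_family n p q =
     {E. admissible n p q E \<and> (\<forall>E'. admissible n p q E' \<longrightarrow> card E' \<le> card E)}"

end

theory Submission
  imports Defs
begin

definition nbr :: "nat set set \<Rightarrow> nat set \<Rightarrow> nat \<Rightarrow> nat" where
  "nbr E A v = card {u\<in>A. {u,v}\<in>E}"

lemma simple_lt:
  assumes "simple_graph n E" "{u,v} \<in> E"
  shows "u < n \<and> v < n \<and> u \<noteq> v"
proof -
  obtain a b where "a \<noteq> b" "a < n" "b < n" "{u,v} = {a,b}"
    using assms unfolding simple_graph_def by blast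
  then show ?thesis by (auto simp: doubleton_eq_iff)
qed

lemma simple_finite:
  assumes "simple_graph n E" shows "finite E"
proof -
  have "E \<subseteq> Pow {..<n}" using assms unfolding simple_graph_def by fastforce
  then show ?thesis by (meson finite_Pow_iff finite_lessThan finite_subset)
qed

lemma simple_noloop: "simple_graph n E \<Longrightarrow> {x,x} \<notin> E"
  using simple_lt by blast

lemma nbr_sum: "finite A \<Longrightarrow> nbr E A v = (\<Sum>u\<in>A. if {u,v}\<in>E then 1 else 0)"
  unfolding nbr_def by (simp add: sum.If_cases Int_def)

lemma degree_nbr:
  assumes "simple_graph n E" shows "degree E v = nbr E {..<n} v"
proof -
  have "{u. {u,v}\<in>E} = {u\<in>{..<n}. {u,v}\<in>E}" using simple_lt[OF assms] by auto
  then show ?thesis unfolding degree_def nbr_def by simp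
qed

lemma handshake:
  assumes "simple_graph n E"
  shows "(\<Sum>v<n. degree E v) = 2 * card E"
proof -
  have fin: "finite {u. {u,v}\<in>E}" for v
    by (rule finite_subset[of _ "{..<n}"]) (use simple_lt[OF assms] in auto)
  have "(\<Sum>v<n. degree E v) = card (SIGMA v:{..<n}. {u. {u,v}\<in>E})"
    unfolding degree_def using fin by simp
  also have "(SIGMA v:{..<n}. {u. {u,v}\<in>E}) = (\<Union>e\<in>E. {(v,u). {u,v} = e})"
    using simple_lt[OF assms] by auto
  also have "card \<dots> = (\<Sum>e\<in>E. card {(v,u). {u,v} = e})"
  proof (rule card_UN_disjoint)
    show "finite E" using simple_finite[OF assms] .
    show "\<forall>e\<in>E. finite {(v,u). {u,v} = e}"
    proof
      fix e assume "e \<in> E"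
      then obtain a b where "e = {a,b}" using assms unfolding simple_graph_def by blast
      then have "{(v,u). {u,v} = e} = {(a,b),(b,a)}" by (auto simp: doubleton_eq_iff)
      then show "finite {(v,u). {u,v} = e}" by simp
    qed
    show "\<forall>i\<in>E. \<forall>j\<in>E. i \<noteq> j \<longrightarrow> {(v,u). {u,v} = i} \<inter> {(v,u). {u,v} = j} = {}" by auto
  qed
  also have "\<dots> = (\<Sum>e\<in>E. 2)"
  proof (rule sum.cong)
    fix e assume "e \<in> E"
    then obtain a b where ab: "a \<noteq> b" "e = {a,b}" using assms unfolding simple_graph_def by blast
    then have "{(v,u). {u,v} = e} = {(a,b),(b,a)}" by (auto simp: doubleton_eq_iff)
    then show "card {(v,u). {u,v} = e} = 2" using ab by simp
  qed simp
  finally show ?thesis by simp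
qed

lemma nbr_sym_sum:
  assumes "finite A" "finite B"
  shows "(\<Sum>v\<in>A. nbr E B v) = (\<Sum>u\<in>B. nbr E A u)"
proof -
  have "(\<Sum>v\<in>A. nbr E B v) = (\<Sum>v\<in>A. \<Sum>u\<in>B. if {u,v}\<in>E then 1 else 0)"
    using assms by (simp add: nbr_sum)
  also have "\<dots> = (\<Sum>u\<in>B. \<Sum>v\<in>A. if {u,v}\<in>E then 1 else 0)" by (rule sum.swap)
  also have "\<dots> = (\<Sum>u\<in>B. \<Sum>v\<in>A. if {v,u}\<in>E then 1 else 0)" by (simp add: insert_commute)
  also have "\<dots> = (\<Sum>u\<in>B. nbr E A u)" using assms by (simp add: nbr_sum)
  finally show ?thesis .
qed

lemma nbr_union:
  assumes "finite A" "finite B" "A \<inter> B = {}"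
  shows "nbr E (A \<union> B) v = nbr E A v + nbr E B v"
  using assms by (simp add: nbr_sum sum.union_disjoint)

lemma nbr_le: "finite B \<Longrightarrow> A \<subseteq> B \<Longrightarrow> nbr E A v \<le> nbr E B v"
  unfolding nbr_def by (rule card_mono) auto

lemma split_sum:
  assumes "simple_graph n E" "T \<subseteq> {..<n}"
  shows "(\<Sum>v<n. degree E v) \<le> (\<Sum>v\<in>{..<n}-T. nbr E ({..<n}-T) v) + 2 * (\<Sum>v\<in>T. degree E v)"
proof -
  define W where "W = {..<n} - T"
  have fT: "finite T" using assms(2) finite_subset by blast
  have fW: "finite W" unfolding W_def by simp
  have VU: "{..<n} = W \<union> T" "W \<inter> T = {}" using assms(2) unfolding W_def by auto
  have "(\<Sum>v<n. degree E v) = (\<Sum>v\<in>W. degree E v) + (\<Sum>v\<in>T. degree E v)"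
    using VU fT fW by (simp add: sum.union_disjoint)
  also have "(\<Sum>v\<in>W. degree E v) = (\<Sum>v\<in>W. nbr E W v) + (\<Sum>v\<in>W. nbr E T v)"
    using degree_nbr[OF assms(1)] VU fT fW by (simp add: nbr_union sum.distrib)
  also have "(\<Sum>v\<in>W. nbr E T v) = (\<Sum>u\<in>T. nbr E W u)" using nbr_sym_sum fT fW by blast
  also have "\<dots> \<le> (\<Sum>u\<in>T. degree E u)"
    by (rule sum_mono) (use degree_nbr[OF assms(1)] VU fT fW in \<open>auto intro!: nbr_le\<close>)
  finally show ?thesis unfolding W_def by simp
qed

lemma remove_sum:
  assumes "simple_graph n E" "finite W" "v \<in> W"
  shows "(\<Sum>x\<in>W. nbr E W x) = (\<Sum>x\<in>W-{v}. nbr E (W-{v}) x) + 2 * nbr E W v"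
proof -
  define W' where "W' = W - {v}"
  have W: "W = W' \<union> {v}" "W' \<inter> {v} = {}" "finite W'" using assms unfolding W'_def by auto
  have nv: "nbr E {v} x = (if {v,x}\<in>E then 1 else 0)" for x by (simp add: nbr_sum)
  have vv: "nbr E {v} v = 0" using simple_noloop[OF assms(1)] nv by simp
  have "(\<Sum>x\<in>W. nbr E W x) = (\<Sum>x\<in>W'. nbr E W x) + nbr E W v"
    using W by (simp add: sum.union_disjoint)
  also have "(\<Sum>x\<in>W'. nbr E W x) = (\<Sum>x\<in>W'. nbr E W' x) + (\<Sum>x\<in>W'. nbr E {v} x)"
    using W by (simp add: nbr_union sum.distrib del: Un_insert_right)
  also have "(\<Sum>x\<in>W'. nbr E {v} x) = (\<Sum>u\<in>{v}. nbr E W' u)" using nbr_sym_sum W(3) by blast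
  also have "\<dots> = nbr E W v"
    using W vv by (simp add: nbr_union del: Un_insert_right)
  finally show ?thesis unfolding W'_def by simp
qed

lemma embed_book:
  assumes simple: "simple_graph n E"
    and fn: "\<forall>i<p. f i < n" and finj: "inj_on f {..<p}"
    and fadj: "\<forall>i<p. \<forall>j<p. i \<noteq> j \<longrightarrow> {f i, f j} \<in> E"
    and C: "C \<subseteq> {..<n}" "\<forall>u\<in>C. \<forall>i<p. {u, f i} \<in> E" "q \<le> card C" "finite C"
  shows "contains_subgraph n E (p+q) (book_edges p q)"
proof -
  obtain C' where C': "C' \<subseteq> C" "card C' = q" "finite C'" using obtain_subset_with_card_n[OF C(3)] by metis
  obtain h where h: "bij_betw h {0..<q} C'" using ex_bij_betw_nat_finite[OF C'(3)] C'(2) by auto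
  define g where "g i = (if i < p then f i else h (i - p))" for i
  have hC: "i < q \<Longrightarrow> h i \<in> C" for i using h C'(1) unfolding bij_betw_def by auto
  have hinj: "i < q \<Longrightarrow> j < q \<Longrightarrow> h i = h j \<Longrightarrow> i = j" for i j
    using h unfolding bij_betw_def inj_on_def by auto
  have ne: "h i \<noteq> f j" if "i < q" "j < p" for i j
    using C(2) hC[OF that(1)] that(2) simple_noloop[OF simple] by metis
  have adj: "{g u, g v} \<in> E" if "u \<noteq> v" "u < p+q" "v < p+q" "u < p" for u v
  proof (cases "v < p")
    case True then show ?thesis using fadj that unfolding g_def by auto
  next
    case False
    then have "h (v-p) \<in> C" using hC that by auto
    then have "{h (v-p), f u} \<in> E" using C(2) that by auto
    then show ?thesis using False that unfolding g_def by (simp add: insert_commute)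
  qed
  show ?thesis unfolding contains_subgraph_def
  proof (intro exI conjI allI impI)
    show "inj_on g {..<p+q}"
    proof (rule inj_onI)
      fix x y assume xy: "x \<in> {..<p+q}" "y \<in> {..<p+q}" "g x = g y"
      show "x = y"
      proof (cases "x < p"; cases "y < p")
        assume "x < p" "y < p" then show ?thesis using xy finj unfolding g_def inj_on_def by auto
      next
        assume "x < p" "\<not> y < p" then show ?thesis using xy ne[of "y-p" x] unfolding g_def by fastforce
      next
        assume "\<not> x < p" "y < p" then show ?thesis using xy ne[of "x-p" y] unfolding g_def by fastforce
      next
        assume "\<not> x < p" "\<not> y < p" then have "x - p = y - p" using xy hinj[of "x-p" "y-p"] unfolding g_def by auto
        then show ?thesis using \<open>\<not> x < p\<close> \<open>\<not> y < p\<close> by linarith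
      qed
    qed
    show "g ` {..<p+q} \<subseteq> {..<n}"
      proof
      fix y assume "y \<in> g ` {..<p+q}"
      then obtain x where x: "x < p+q" "y = g x" by auto
      show "y \<in> {..<n}"
      proof (cases "x < p")
        case True then show ?thesis using x fn unfolding g_def by auto
      next
        case False then have "x - p < q" using x by linarith
        then show ?thesis using x hC C(1) False unfolding g_def by auto
      qed
    qed
    fix u v assume "{u,v} \<in> book_edges p q"
    then obtain u' v' where uv: "{u,v} = {u',v'}" "u' \<noteq> v'" "u' < p+q" "v' < p+q" "u' < p \<or> v' < p"
      unfolding book_edges_def by blast
    have "{g u', g v'} \<in> E"
      using uv(5) adj[OF uv(2-4)] adj[of v' u'] uv(2-4) by (auto simp: insert_commute)
    moreover have "{g u, g v} = {g u', g v'}" using uv(1) by (auto simp: doubleton_eq_iff)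
    ultimately show "{g u, g v} \<in> E" by simp
  qed
qed

lemma greedy:
  assumes simple: "simple_graph n E" and W: "W \<subseteq> {..<n}" "finite W" and q: "q \<ge> 1"
    and cb: "\<And>m f. m \<le> p \<Longrightarrow> (\<forall>i<m. f i \<in> W) \<Longrightarrow> q \<le> card {u\<in>W. \<forall>i<m. {u, f i}\<in>E}"
  shows "contains_subgraph n E (p+q) (book_edges p q)"
proof -
  have cl: "m \<le> p \<Longrightarrow> \<exists>f. (\<forall>i<m. f i \<in> W) \<and> inj_on f {..<m} \<and> (\<forall>i<m. \<forall>j<m. i \<noteq> j \<longrightarrow> {f i, f j} \<in> E)" for m
  proof (induction m)
    case 0 then show ?case by auto
  next
    case (Suc m)
    then obtain f where f: "\<forall>i<m. f i \<in> W" "inj_on f {..<m}" "\<forall>i<m. \<forall>j<m. i \<noteq> j \<longrightarrow> {f i, f j} \<in> E"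
      by auto
    have "q \<le> card {u\<in>W. \<forall>i<m. {u, f i}\<in>E}" using cb[of m f] Suc.prems f(1) by auto
    then have "card {u\<in>W. \<forall>i<m. {u, f i}\<in>E} \<noteq> 0" using q by linarith
    then have "{u\<in>W. \<forall>i<m. {u, f i}\<in>E} \<noteq> {}" by (metis card.empty)
    then obtain u where u: "u \<in> W" "\<forall>i<m. {u, f i}\<in>E" by auto
    have une: "u \<noteq> f i" if "i < m" for i using u(2) that simple_noloop[OF simple] by metis
    define f' where "f' = f(m := u)"
    have "\<forall>i<Suc m. f' i \<in> W" using f(1) u(1) unfolding f'_def by (auto simp: less_Suc_eq)
    moreover have "inj_on f' {..<Suc m}"
      using f(2) une unfolding f'_def inj_on_def by (auto simp: less_Suc_eq) (metis)+
    moreover have "\<forall>i<Suc m. \<forall>j<Suc m. i \<noteq> j \<longrightarrow> {f' i, f' j} \<in> E"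
      using f(3) u(2) unfolding f'_def by (auto simp: less_Suc_eq insert_commute)
    ultimately show ?case by blast
  qed
  obtain f where f: "\<forall>i<p. f i \<in> W" "inj_on f {..<p}" "\<forall>i<p. \<forall>j<p. i \<noteq> j \<longrightarrow> {f i, f j} \<in> E"
    using cl[of p] by auto
  show ?thesis
  proof (rule embed_book[OF simple _ f(2) f(3), of "{u\<in>W. \<forall>i<p. {u, f i}\<in>E}"])
    show "\<forall>i<p. f i < n" using f(1) W(1) by auto
    show "{u \<in> W. \<forall>i<p. {u, f i} \<in> E} \<subseteq> {..<n}" using W(1) by auto
    show "\<forall>u\<in>{u \<in> W. \<forall>i<p. {u, f i} \<in> E}. \<forall>i<p. {u, f i} \<in> E" by auto
    show "q \<le> card {u \<in> W. \<forall>i<p. {u, f i} \<in> E}" using cb[of p f] f(1) by auto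
    show "finite {u \<in> W. \<forall>i<p. {u, f i} \<in> E}" using W(2) by auto
  qed
qed

lemma common_bound:
  assumes simple: "simple_graph n E" and W: "finite W"
    and nd: "\<forall>v\<in>W. real (nbr E W v) > (1 - 1/real p + \<epsilon>) * (real (card W) - 1)"
    and p: "p \<ge> 1" and q: "q \<ge> 1" and eps: "0 < \<epsilon>" "\<epsilon> \<le> 1 / real p"
    and k: "real (card W) \<ge> real (p+q) / \<epsilon>"
    and m: "m \<le> p" and f: "\<forall>i<m. f i \<in> W"
  shows "q \<le> card {u\<in>W. \<forall>i<m. {u, f i}\<in>E}"
proof -
  define k where "k = card W"
  define c where "c = 1 - 1/real p + \<epsilon>"
  define NN where "NN v = {u\<in>W. {u,v}\<notin>E}" for v
  have c1: "c \<le> 1" using eps unfolding c_def by simp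
  have NNb: "real (card (NN v)) \<le> (1/real p - \<epsilon>) * k + 1" if "v \<in> W" for v
  proof -
    have "NN v = W - {u\<in>W. {u,v}\<in>E}" unfolding NN_def by auto
    then have "card (NN v) = k - nbr E W v" unfolding k_def nbr_def using W
      by (simp add: card_Diff_subset)
    moreover have "nbr E W v \<le> k" unfolding nbr_def k_def using W by (intro card_mono) auto
    ultimately have "real (card (NN v)) = k - real (nbr E W v)" by simp
    also have "\<dots> \<le> real k - c * (real k - 1)" using nd that unfolding c_def k_def by force
    also have "\<dots> = (1 - c) * k + c" by (simp add: algebra_simps)
    also have "\<dots> \<le> (1/real p - \<epsilon>) * k + 1" using c1 unfolding c_def by simp
    finally show ?thesis .
  qed
  define C where "C = {u\<in>W. \<forall>i<m. {u, f i}\<in>E}"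
  have "W - C \<subseteq> (\<Union>i\<in>{..<m}. NN (f i))" unfolding C_def NN_def by auto
  then have "card (W - C) \<le> card (\<Union>i\<in>{..<m}. NN (f i))"
    using W by (intro card_mono) (auto simp: NN_def)
  also have "\<dots> \<le> (\<Sum>i<m. card (NN (f i)))" by (rule card_UN_le) simp
  finally have "real (card (W - C)) \<le> (\<Sum>i<m. real (card (NN (f i))))" by (simp flip: of_nat_sum)
  also have "\<dots> \<le> (\<Sum>i<m. (1/real p - \<epsilon>) * k + 1)" using NNb f by (intro sum_mono) auto
  also have "\<dots> = m * ((1/real p - \<epsilon>) * k + 1)" by simp
  finally have WC: "real (card (W - C)) \<le> m * ((1/real p - \<epsilon>) * k + 1)" .
  have "card C = k - card (W - C)"
  proof -
    have "C \<subseteq> W" unfolding C_def by auto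
    then have "card C \<le> card W" "card (W - C) = card W - card C"
      using W by (auto intro: card_mono card_Diff_subset finite_subset)
    then show ?thesis unfolding k_def by simp
  qed
  moreover have "card (W - C) \<le> k" unfolding k_def using W by (simp add: card_mono)
  ultimately have Cr: "real (card C) = k - real (card (W - C))" by simp
  have pos: "real p > 0" using p by simp
  have ek: "\<epsilon> * k \<ge> real (p+q)" using k eps unfolding k_def by (simp add: field_simps)
  have km: "k * (1 - m / real p) \<ge> 0" using m pos by (simp add: field_simps mult_left_mono)
  have "real (card C) \<ge> k * (1 - m/real p) + m * (\<epsilon> * k) - m"
    using Cr WC by (simp add: algebra_simps)
  then have main: "real (card C) \<ge> m * (\<epsilon> * k) - m" using km by linarith
  show ?thesis
  proof (cases "m = 0")
    case True
    have "\<epsilon> \<le> 1" using eps p by (smt (verit) divide_le_eq_1 of_nat_1 of_nat_mono)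
    then have "real (p+q) \<le> real (p+q) / \<epsilon>" using eps by (simp add: le_divide_eq mult_left_le)
    then have "real k \<ge> q" using k unfolding k_def by simp
    then show ?thesis using True unfolding C_def k_def by simp
  next
    case False
    have "m * (\<epsilon> * k) \<ge> m * real (p+q)" using ek by (simp add: mult_left_mono)
    then have "real (card C) \<ge> m * real (p + q) - m" using main by linarith
    moreover have "m * real (p + q) - m \<ge> q" using False p
    proof -
      have "real m \<ge> 1" using False by simp
      then have "m * real (p + q - 1) \<ge> real (p + q - 1)" by (simp add: mult_le_cancel_right1)
      then show ?thesis using p by (simp add: algebra_simps of_nat_diff)
    qed
    ultimately show ?thesis unfolding C_def by simp
  qed
qed

lemma book_bound:
  assumes simple: "simple_graph n E" and free: "\<not> contains_subgraph n E (p+q) (book_edges p q)"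
    and p: "p \<ge> 1" and q: "q \<ge> 1" and eps: "0 < \<epsilon>" "\<epsilon> \<le> 1 / real p"
    and W0: "W0 \<subseteq> {..<n}"
  shows "real (\<Sum>v\<in>W0. nbr E W0 v) - (1 - 1/real p + \<epsilon>) * (real (card W0))^2
           + (1 - 1/real p + \<epsilon>) * real (card W0) < (real (p+q) / \<epsilon>)^2"
proof (rule ccontr)
  define c where "c = 1 - 1/real p + \<epsilon>"
  define K where "K = (real (p+q) / \<epsilon>)^2"
  define g where "g W = real (\<Sum>v\<in>W. nbr E W v) - c * (real (card W))^2 + c * real (card W)" for W
  assume "\<not> ?thesis"
  then have gW0: "g W0 \<ge> K" unfolding g_def c_def K_def by simp
  define P where "P k = (\<exists>W. W \<subseteq> W0 \<and> card W = k \<and> g W \<ge> K)" for k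
  have "P (card W0)" unfolding P_def using gW0 by blast
  then have PL: "P (LEAST k. P k)" by (rule LeastI)
  then obtain W where W: "W \<subseteq> W0" "card W = (LEAST k. P k)" "g W \<ge> K" unfolding P_def by blast
  have minW: "g W' < K" if "W' \<subseteq> W0" "card W' < card W" for W'
  proof (rule ccontr)
    assume "\<not> g W' < K"
    then have "P (card W')" unfolding P_def using that by auto
    then show False using not_less_Least that(2) W(2) by metis
  qed
  have Wn: "W \<subseteq> {..<n}" using W(1) W0 by auto
  have fW: "finite W" using finite_subset[OF Wn finite_lessThan] .
  define k where "k = card W"
  have Kpos: "K > 0" unfolding K_def using eps p by simp
  have c0: "c \<ge> 0"
  proof -
    have "1 / real p \<le> 1" using p by simp
    then show ?thesis using eps unfolding c_def by simp
  qed
  have kne: "k \<noteq> 0"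
  proof
    assume "k = 0"
    then have "W = {}" using fW unfolding k_def by simp
    then have "g W = 0" unfolding g_def by simp
    then show False using W(3) Kpos by simp
  qed
  have nd: "\<forall>v\<in>W. real (nbr E W v) > c * (real k - 1)"
  proof
    fix v assume v: "v \<in> W"
    have "card (W - {v}) < card W" using v fW by (meson card_Diff1_less)
    moreover have "W - {v} \<subseteq> W0" using W(1) by auto
    ultimately have "g (W - {v}) < K" using minW by blast
    then have lt: "g (W - {v}) < g W" using W(3) by simp
    have s: "(\<Sum>x\<in>W. nbr E W x) = (\<Sum>x\<in>W-{v}. nbr E (W-{v}) x) + 2 * nbr E W v"
      using remove_sum[OF simple fW v] .
    have "card (W - {v}) = k - 1" using v fW unfolding k_def by simp
    then have ck: "real (card (W - {v})) = real k - 1" using kne by simp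
    have "g W - g (W - {v}) = 2 * real (nbr E W v) - 2 * c * (real k - 1)"
      unfolding g_def ck using s unfolding k_def[symmetric] by (simp add: algebra_simps power2_eq_square)
    then show "real (nbr E W v) > c * (real k - 1)" using lt by simp
  qed
  have nk: "nbr E W x \<le> k" for x unfolding nbr_def k_def using fW by (intro card_mono) auto
  have "(\<Sum>x\<in>W. nbr E W x) \<le> (\<Sum>x\<in>W. k)" by (rule sum_mono) (rule nk)
  then have "(\<Sum>x\<in>W. nbr E W x) \<le> k * k" unfolding k_def by simp
  then have sumle: "real (\<Sum>x\<in>W. nbr E W x) \<le> real k * real k" by (metis of_nat_le_iff of_nat_mult)
  have "K \<le> g W" using W(3) .
  also have "g W \<le> real k ^ 2 - c * (real k ^ 2 - real k)"
    using sumle unfolding g_def k_def[symmetric] by (simp add: algebra_simps power2_eq_square)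
  also have "\<dots> \<le> real k ^ 2"
  proof -
    have "real k ^ 2 - real k \<ge> 0" using kne by (simp add: power2_eq_square)
    then show ?thesis using c0 by simp
  qed
  finally have "(real (p+q) / \<epsilon>)^2 \<le> real k ^ 2" unfolding K_def .
  then have kb: "real (p+q) / \<epsilon> \<le> real k" by (rule power2_le_imp_le) simp
  have "contains_subgraph n E (p+q) (book_edges p q)"
  proof (rule greedy[OF simple Wn fW q])
    fix m f assume "m \<le> p" "\<forall>i<m. f i \<in> W"
    then show "q \<le> card {u \<in> W. \<forall>i<m. {u, f i} \<in> E}"
      using common_bound[OF simple fW _ p q eps] nd kb unfolding c_def k_def by blast
  qed
  then show False using free by simp
qed

definition bad :: "nat \<Rightarrow> nat \<Rightarrow> nat \<Rightarrow> bool" where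
  "bad p u v \<longleftrightarrow> (u = 0 \<and> v mod p = 1 \<and> v \<noteq> 1) \<or> (u = p \<and> v = 1)"

definition adjc :: "nat \<Rightarrow> nat \<Rightarrow> nat \<Rightarrow> bool" where
  "adjc p u v \<longleftrightarrow> (u mod p \<noteq> v mod p \<and> \<not> bad p u v \<and> \<not> bad p v u) \<or> (u = 0 \<and> v = p) \<or> (u = p \<and> v = 0)"

definition Econ :: "nat \<Rightarrow> nat \<Rightarrow> nat set set" where
  "Econ n p = {{u,v} | u v. u < n \<and> v < n \<and> u \<noteq> v \<and> adjc p u v}"

lemma adjc_sym: "adjc p u v = adjc p v u"
  unfolding adjc_def by auto

lemma Econ_mem: "{x,y} \<in> Econ n p \<longleftrightarrow> x < n \<and> y < n \<and> x \<noteq> y \<and> adjc p x y"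
proof
  assume "{x,y} \<in> Econ n p"
  then obtain u v where uv: "{x,y} = {u,v}" "u < n" "v < n" "u \<noteq> v" "adjc p u v"
    unfolding Econ_def by blast
  then show "x < n \<and> y < n \<and> x \<noteq> y \<and> adjc p x y"
    using adjc_sym by (auto simp: doubleton_eq_iff)
qed (auto simp: Econ_def)

lemma Econ_simple: "simple_graph n (Econ n p)"
  unfolding simple_graph_def Econ_def by blast

lemma same_res:
  assumes "adjc p x y" "x mod p = y mod p"
  shows "(x = 0 \<and> y = p) \<or> (x = p \<and> y = 0)"
  using assms unfolding adjc_def by auto

lemma tri2:
  assumes p: "p \<ge> 3" and xy: "x \<noteq> y" "adjc p x y" "x mod p = y mod p"
    and z: "z \<noteq> x" "z \<noteq> y" "z mod p \<le> 1" "adjc p x z" "adjc p y z"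
  shows False
proof -
  have pm: "p mod p = 0" "0 mod p = 0" "1 mod p = 1" using p by auto
  have xy0: "(x = 0 \<and> y = p) \<or> (x = p \<and> y = 0)" using same_res xy by blast
  then have r: "x mod p = 0" using pm by auto
  show False
  proof (cases "z mod p = 0")
    case True
    then have "(x = 0 \<and> z = p) \<or> (x = p \<and> z = 0)" using same_res[OF z(4)] r by simp
    then show False using xy0 z by auto
  next
    case False
    then have z1: "z mod p = 1" using z(3) by simp
    have a0: "adjc p 0 z" "adjc p p z" using xy0 z(4,5) by auto
    have "z = 1" using a0(1) z1 pm p unfolding adjc_def bad_def by auto
    moreover have "z \<noteq> 1" using a0(2) z1 pm p unfolding adjc_def bad_def by auto
    ultimately show False by simp
  qed
qed

lemma triangle:
  assumes p: "p \<ge> 3" and d: "x \<noteq> y" "y \<noteq> z" "x \<noteq> z"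
    and m: "x mod p \<le> 1" "y mod p \<le> 1" "z mod p \<le> 1"
    and a: "adjc p x y" "adjc p y z" "adjc p x z"
  shows False
proof -
  have "x mod p = y mod p \<or> y mod p = z mod p \<or> x mod p = z mod p" using m by linarith
  moreover have b: "adjc p y x" "adjc p z y" "adjc p z x" using a adjc_sym by blast+
  moreover have "x mod p = y mod p \<Longrightarrow> False"
    by (rule tri2[OF p d(1) a(1) _ _ _ m(3) a(3) a(2)]) (use d in auto)
  moreover have "y mod p = z mod p \<Longrightarrow> False"
    by (rule tri2[OF p d(2) a(2) _ _ _ m(1) b(1) b(3)]) (use d in auto)
  moreover have "x mod p = z mod p \<Longrightarrow> False"
    by (rule tri2[OF p d(3) a(3) _ _ _ m(2) a(1) b(2)]) (use d in auto)
  ultimately show False by blast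
qed

lemma clique_bound:
  assumes p: "p \<ge> 3" and X: "finite X" and cl: "\<forall>x\<in>X. \<forall>y\<in>X. x \<noteq> y \<longrightarrow> adjc p x y"
  shows "card X \<le> p"
proof -
  define A where "A = X \<inter> {v. v mod p \<le> 1}"
  define B where "B j = X \<inter> {v. v mod p = j}" for j
  have XU: "X \<subseteq> A \<union> (\<Union>j\<in>{2..<p}. B j)"
  proof
    fix x assume "x \<in> X"
    moreover have "x mod p < p" using p by simp
    ultimately show "x \<in> A \<union> (\<Union>j\<in>{2..<p}. B j)" unfolding A_def B_def
      by (cases "x mod p \<le> 1") auto
  qed
  have cA: "card A \<le> 2"
  proof (rule ccontr)
    assume "\<not> card A \<le> 2"
    then have "3 \<le> card A" by simp
    then obtain T where T: "T \<subseteq> A" "card T = 3" by (metis obtain_subset_with_card_n)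
    then obtain x y z where xyz: "T = {x,y,z}" "x \<noteq> y" "y \<noteq> z" "x \<noteq> z" by (auto simp: card_3_iff)
    have "x \<in> A" "y \<in> A" "z \<in> A" using T xyz by auto
    then have X3: "x \<in> X" "y \<in> X" "z \<in> X" "x mod p \<le> 1" "y mod p \<le> 1" "z mod p \<le> 1"
      unfolding A_def by auto
    have "adjc p x y" "adjc p y z" "adjc p x z" using cl X3 xyz by auto
    then show False using triangle[OF p xyz(2-4) X3(4-6)] by blast
  qed
  have cB: "card (B j) \<le> 1" if "j \<in> {2..<p}" for j
  proof -
    have "\<forall>a1\<in>B j. \<forall>a2\<in>B j. a1 = a2"
    proof (intro ballI)
      fix a1 a2 assume a: "a1 \<in> B j" "a2 \<in> B j"
      show "a1 = a2"
      proof (rule ccontr)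
        assume "a1 \<noteq> a2"
        then have "adjc p a1 a2" using cl a unfolding B_def by auto
        moreover have "a1 mod p = j" "a2 mod p = j" using a unfolding B_def by auto
        moreover have "p mod p = 0" "0 mod p = 0" by auto
        ultimately show False using that unfolding adjc_def by auto
      qed
    qed
    moreover have "finite (B j)" using X unfolding B_def by simp
    ultimately show ?thesis using card_le_Suc0_iff_eq by (metis One_nat_def)
  qed
  have fU: "finite (A \<union> (\<Union>j\<in>{2..<p}. B j))" using X unfolding A_def B_def by simp
  have s1: "card X \<le> card (A \<union> (\<Union>j\<in>{2..<p}. B j))"
    using card_mono[OF fU XU] .
  have s2: "card (A \<union> (\<Union>j\<in>{2..<p}. B j)) \<le> card A + card (\<Union>j\<in>{2..<p}. B j)" by (rule card_Un_le)
  have s3: "card (\<Union>j\<in>{2..<p}. B j) \<le> (\<Sum>j\<in>{2..<p}. card (B j))" by (rule card_UN_le) simp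
  have s4: "(\<Sum>j\<in>{2..<p}. card (B j)) \<le> (\<Sum>j\<in>{2..<p}. 1)" using cB by (intro sum_mono) auto
  have s5: "(\<Sum>j\<in>{2..<p}. (1::nat)) = p - 2" by simp
  show ?thesis using s1 s2 s3 s4 s5 cA p by linarith
qed

lemma chrom_gt:
  assumes "\<not> colorable n E p" shows "chromatic_number n E > p"
proof (rule ccontr)
  assume "\<not> ?thesis"
  then have le: "chromatic_number n E \<le> p" by simp
  have "colorable n E n" unfolding colorable_def by (rule exI[of _ id]) auto
  then have "colorable n E (chromatic_number n E)" unfolding chromatic_number_def by (rule LeastI)
  then have "colorable n E p" using le unfolding colorable_def by (meson order_less_le_trans)
  then show False using assms by simp
qed

lemma two_set:
  assumes "card R = 2" "a \<in> R" "b \<in> R" "c \<in> R" "a \<noteq> b" "b \<noteq> c"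
  shows "a = c"
proof -
  obtain r1 r2 where "R = {r1, r2}" using assms(1) by (auto simp: card_2_iff)
  then show ?thesis using assms by auto
qed

lemma not_colorable:
  assumes p: "p \<ge> 3" and n: "n > 2 * p"
  shows "\<not> colorable n (Econ n p) p"
proof
  assume "colorable n (Econ n p) p"
  then obtain c where c: "\<forall>v<n. c v < p" "\<forall>u v. u \<noteq> v \<longrightarrow> {u,v} \<in> Econ n p \<longrightarrow> c u \<noteq> c v"
    unfolding colorable_def by blast
  have ce: "c u \<noteq> c v" if "u < n" "v < n" "u \<noteq> v" "adjc p u v" for u v
    using c(2) that Econ_mem by blast
  have pm0: "p mod p = 0" "0 mod p = 0" "1 mod p = 1" "(2*p) mod p = 0"
    using p by auto
  have "(p+1) mod p = 1 mod p" by (rule mod_add_self1)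
  then have pm: "p mod p = 0" "0 mod p = 0" "1 mod p = 1" "(p+1) mod p = 1" "(2*p) mod p = 0"
    using pm0 by auto
  have jm: "j mod p = j" if "j \<in> {2..<p}" for j using that by auto
  define Cw where "Cw = c ` {2..<p}"
  have inj: "inj_on c {2..<p}"
  proof (rule inj_onI)
    fix x y assume xy: "x \<in> {2..<p}" "y \<in> {2..<p}" "c x = c y"
    show "x = y"
    proof (rule ccontr)
      assume "x \<noteq> y"
      moreover have "adjc p x y" using xy \<open>x \<noteq> y\<close> jm[OF xy(1)] jm[OF xy(2)] unfolding adjc_def bad_def by auto
      ultimately show False using ce[of x y] xy n by auto
    qed
  qed
  have cCw: "card Cw = p - 2" unfolding Cw_def using card_image[OF inj] by simp
  have Cwsub: "Cw \<subseteq> {..<p}" unfolding Cw_def using c(1) n by auto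
  define R where "R = {..<p} - Cw"
  have cR: "card R = 2" unfolding R_def using Cwsub cCw p by (simp add: card_Diff_subset finite_subset)
  have inR: "c x \<in> R" if "x < n" "x mod p \<le> 1" "x \<noteq> 1 \<or> True" for x
  proof -
    have "c x \<notin> Cw"
    proof
      assume "c x \<in> Cw"
      then obtain j where j: "j \<in> {2..<p}" "c j = c x" unfolding Cw_def by auto
      have "adjc p j x" using j(1) jm[OF j(1)] that p unfolding adjc_def bad_def by auto
      moreover have "j \<noteq> x" using j(1) jm[OF j(1)] that by auto
      ultimately show False using ce[of j x] j that n by auto
    qed
    then show ?thesis unfolding R_def using c(1) that by auto
  qed
  have n1: "0 < n" "p < n" "p + 1 < n" "2*p < n" "1 < n" using n p by auto
  have R0: "c 0 \<in> R" using inR[of 0] n1 by simp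
  have Rp: "c p \<in> R" using inR[of p] n1 pm by simp
  have Rp1: "c (p+1) \<in> R" using inR[of "p+1"] n1 pm by simp
  have R2p: "c (2*p) \<in> R" using inR[of "2*p"] n1 pm by simp
  have R1: "c 1 \<in> R" using inR[of 1] n1 pm by simp
  have a1: "c 0 \<noteq> c p" using ce[of 0 p] n1 p unfolding adjc_def by auto
  have a2: "c p \<noteq> c (p+1)" using ce[of p "p+1"] n1 p pm unfolding adjc_def bad_def by auto
  have a3: "c (p+1) \<noteq> c (2*p)" using ce[of "p+1" "2*p"] n1 p pm unfolding adjc_def bad_def by auto
  have a4: "c (2*p) \<noteq> c 1" using ce[of "2*p" 1] n1 p pm unfolding adjc_def bad_def by auto
  have a5: "c 1 \<noteq> c 0" using ce[of 1 0] n1 p pm unfolding adjc_def bad_def by auto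
  have "c 0 = c (p+1)" using two_set[OF cR R0 Rp Rp1 a1 a2] .
  moreover have "c (p+1) = c 1" using two_set[OF cR Rp1 R2p R1 a3 a4] .
  ultimately show False using a5 by simp
qed

lemma Econ_free:
  assumes p: "p \<ge> 3" and q: "q \<ge> 1"
  shows "\<not> contains_subgraph n (Econ n p) (p+q) (book_edges p q)"
proof
  assume "contains_subgraph n (Econ n p) (p+q) (book_edges p q)"
  then obtain f where f: "inj_on f {..<p+q}" "f ` {..<p+q} \<subseteq> {..<n}"
    "\<forall>u v. {u,v} \<in> book_edges p q \<longrightarrow> {f u, f v} \<in> Econ n p"
    unfolding contains_subgraph_def by blast
  define X where "X = f ` {..<p+1}"
  have sub: "{..<p+1} \<subseteq> {..<p+q}" using q by auto
  have cX: "card X = p + 1" unfolding X_def using inj_on_subset[OF f(1) sub] by (simp add: card_image)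
  have "\<forall>x\<in>X. \<forall>y\<in>X. x \<noteq> y \<longrightarrow> adjc p x y"
  proof (intro ballI impI)
    fix x y assume xy: "x \<in> X" "y \<in> X" "x \<noteq> y"
    then obtain i j where ij: "i < p+1" "j < p+1" "x = f i" "y = f j" unfolding X_def by auto
    then have "i \<noteq> j" using xy by auto
    then have "{i,j} \<in> book_edges p q" using ij q unfolding book_edges_def by force
    then have "{x,y} \<in> Econ n p" using f(3) ij by auto
    then show "adjc p x y" using Econ_mem by blast
  qed
  then have "card X \<le> p" using clique_bound[OF p] unfolding X_def by blast
  then show False using cX by simp
qed

lemma res_class_card:
  assumes "p > 0" shows "card {u\<in>{..<n}. u mod p = r} \<le> n div p + 1"
proof -
  have "{u\<in>{..<n}. u mod p = r} \<subseteq> (\<lambda>i. r + p*i) ` {..n div p}"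
  proof
    fix u assume u: "u \<in> {u\<in>{..<n}. u mod p = r}"
    have "u = u mod p + p * (u div p)" by simp
    moreover have "u div p \<le> n div p" using u by (simp add: div_le_mono)
    ultimately show "u \<in> (\<lambda>i. r + p*i) ` {..n div p}" using u by force
  qed
  then have "card {u\<in>{..<n}. u mod p = r} \<le> card ((\<lambda>i. r + p*i) ` {..n div p})"
    by (intro card_mono) auto
  also have "\<dots> \<le> card {..n div p}" by (rule card_image_le) simp
  finally show ?thesis by simp
qed

lemma nat_diff_real: "real (a - b) \<ge> real a - real b"
  by (cases "b \<le> a") auto

lemma deg_con:
  assumes p: "p \<ge> 3" and v: "v < n" "v \<noteq> 0" "v \<noteq> p"
  shows "n - (n div p + 1) - 2 \<le> degree (Econ n p) v"
proof -
  define M where "M = {u\<in>{..<n}. u mod p \<noteq> v mod p}"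
  define N where "N = M - {0,p}"
  have "N \<subseteq> {u. {u,v} \<in> Econ n p}"
  proof
    fix u assume u: "u \<in> N"
    then have "u < n" "u mod p \<noteq> v mod p" "u \<noteq> 0" "u \<noteq> p" unfolding N_def M_def by auto
    moreover then have "u \<noteq> v" by auto
    moreover have "adjc p u v" using calculation v unfolding adjc_def bad_def by auto
    ultimately show "u \<in> {u. {u,v} \<in> Econ n p}" using v Econ_mem by auto
  qed
  moreover have "finite {u. {u,v} \<in> Econ n p}"
    by (rule finite_subset[of _ "{..<n}"]) (use Econ_mem in auto)
  ultimately have "card N \<le> degree (Econ n p) v" unfolding degree_def by (rule card_mono[rotated])
  moreover have "card M - 2 \<le> card N"
  proof -
    have "card M - card {0,p} \<le> card N" unfolding N_def by (rule diff_card_le_card_Diff) simp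
    moreover have "card {0,p} \<le> 2" by (rule card_insert_le_m1) auto
    ultimately show ?thesis by linarith
  qed
  moreover have "n - (n div p + 1) \<le> card M"
  proof -
    have "M = {..<n} - {u\<in>{..<n}. u mod p = v mod p}" unfolding M_def by auto
    moreover have "card ({..<n} - {u\<in>{..<n}. u mod p = v mod p}) = card {..<n} - card {u\<in>{..<n}. u mod p = v mod p}"
      by (rule card_Diff_subset) auto
    ultimately have "card M = n - card {u\<in>{..<n}. u mod p = v mod p}" by simp
    moreover have "card {u\<in>{..<n}. u mod p = v mod p} \<le> n div p + 1" using res_class_card p by simp
    ultimately show ?thesis by linarith
  qed
  ultimately show ?thesis by linarith
qed

lemma sum_con:
  assumes p: "p \<ge> 3" and n: "n > 2 * p"
  shows "2 * real (card (Econ n p)) \<ge> (real n - 2) * (real n - real n / real p - 3)"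
proof -
  define D where "D = n - (n div p + 1) - 2"
  have "(\<Sum>v<n. degree (Econ n p) v) = 2 * card (Econ n p)" by (rule handshake[OF Econ_simple])
  moreover have "(\<Sum>v\<in>{..<n} - {0,p}. degree (Econ n p) v) \<le> (\<Sum>v<n. degree (Econ n p) v)"
    by (rule sum_mono2) auto
  moreover have "card ({..<n} - {0,p}) * D \<le> (\<Sum>v\<in>{..<n} - {0,p}. degree (Econ n p) v)"
  proof -
    have "(\<Sum>v\<in>{..<n} - {0,p}. D) \<le> (\<Sum>v\<in>{..<n} - {0,p}. degree (Econ n p) v)"
      using deg_con[OF p] unfolding D_def by (intro sum_mono) auto
    then show ?thesis by simp
  qed
  moreover have "card ({..<n} - {0,p}) = n - 2" using n p by (simp add: card_Diff_subset)
  ultimately have le: "(n - 2) * D \<le> 2 * card (Econ n p)" by (metis order_trans)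
  have "real D \<ge> real n - real n / real p - 3"
  proof -
    have "n div p * p \<le> n" by (rule div_times_less_eq_dividend)
    then have "real (n div p) * real p \<le> real n" by (metis of_nat_le_iff of_nat_mult)
    then have "real (n div p) \<le> real n / real p"
      using p by (simp add: le_divide_eq)
    then show ?thesis unfolding D_def using nat_diff_real[of n "n div p + 1"] nat_diff_real[of "n - (n div p + 1)" 2]
      by simp
  qed
  moreover have "real (n - 2) = real n - 2" using n p by simp
  moreover have "real n - 2 \<ge> 0" using n p by simp
  ultimately have "(real n - 2) * (real n - real n / real p - 3) \<le> real (n - 2) * real D"
    by (simp add: mult_left_mono)
  also have "\<dots> \<le> 2 * real (card (Econ n p))" using le by (metis of_nat_le_iff of_nat_mult of_nat_numeral)
  finally show ?thesis .
qed

lemma final_arith: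
  fixes a \<eta> \<epsilon> k n K D X :: real
  assumes a: "0 \<le> a" "a \<le> 1" and eta: "0 < \<eta>" "\<eta> \<le> 1" and eps: "\<epsilon> = \<eta>^2"
    and k: "k \<ge> \<eta> * n" "k \<le> \<eta> * n + 1" "k \<le> n"
    and n: "n \<ge> 1" and nK: "\<eta>^2 * n \<ge> 8 + K" and K: "K \<ge> 0"
    and D: "D \<ge> a * n^2 - 5 * n"
    and X: "X \<ge> D - 2 * k * ((a - 5 * \<eta>) * n)"
    and B: "X - (a + \<epsilon>) * (n - k)^2 + (a + \<epsilon>) * (n - k) < K"
  shows False
proof -
  have k0: "k \<ge> 0" using k eta n by (smt (verit) mult_nonneg_nonneg)
  have t0: "(a + \<epsilon>) * (n - k) \<ge> 0" using a eps k by simp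
  have "K > D - 2 * k * ((a - 5 * \<eta>) * n) - (a + \<epsilon>) * (n - k)^2" using B X t0 by linarith
  moreover have "D - 2 * k * ((a - 5 * \<eta>) * n) - (a + \<epsilon>) * (n - k)^2
      \<ge> -5 * n + 10 * (\<eta> * k * n) - a * k^2 - \<epsilon> * (n - k)^2"
    using D by (simp add: algebra_simps power2_eq_square)
  moreover have "10 * (\<eta> * k * n) \<ge> 10 * (\<eta>^2 * n^2)"
  proof -
    have "\<eta> * n * (10 * \<eta> * n) \<le> k * (10 * \<eta> * n)"
      by (rule mult_right_mono) (use k eta n in auto)
    then show ?thesis by (simp add: algebra_simps power2_eq_square)
  qed
  moreover have "a * k^2 \<le> k^2" using a mult_right_mono[of a 1 "k^2"] by simp
  moreover have "k^2 \<le> \<eta>^2 * n^2 + 2 * n + 1"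
  proof -
    have "k^2 \<le> (\<eta> * n + 1)^2" using k k0 by (intro power_mono) auto
    also have "\<dots> = \<eta>^2 * n^2 + 2 * (\<eta> * n) + 1" by (simp add: algebra_simps power2_eq_square)
    also have "\<eta> * n \<le> n" using eta n by (simp add: mult_le_cancel_right1)
    finally show ?thesis by simp
  qed
  moreover have "\<epsilon> * (n - k)^2 \<le> \<eta>^2 * n^2"
  proof -
    have "(n - k)^2 \<le> n^2" using k k0 by (intro power_mono) auto
    then show ?thesis using eps by (simp add: mult_left_mono)
  qed
  moreover have "\<eta>^2 * n^2 \<ge> 8 * n + K * n"
  proof -
    have "(8 + K) * n \<le> (\<eta>^2 * n) * n" using nK n by (intro mult_right_mono) auto
    then show ?thesis by (simp add: power2_eq_square algebra_simps)
  qed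
  moreover have "K * n \<ge> K" using K n by (simp add: mult_le_cancel_left1)
  moreover have "\<eta>^2 * n^2 \<ge> 0" by simp
  ultimately show False using n by linarith
qed

theorem lemma3p2:
  fixes p q :: nat and \<eta> :: real
  assumes "p \<ge> 3" and "q \<ge> 1" and "0 < \<eta>" and "\<eta> < 1 / (7 * real p ^ 5 * real q)"
  shows "\<exists>N. \<forall>n \<ge> N. \<forall>E.
           E \<in> extremal_family n p q \<and>
           min_degree n E = Min (min_degree n ` extremal_family n p q) \<longrightarrow>
           real (card {v \<in> {..<n}. real (degree E v) \<le> ((real p - 1) / real p - 5 * \<eta>) * real n})
             \<le> \<eta> * real n"
proof -
  have p1: "p \<ge> 1" using assms(1) by simp
  have ppos: "real p > 0" using p1 by simp
  have "real p \<le> real p ^ 5"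
  proof -
    have "1 \<le> real p ^ 4" using p1 by simp
    then have "real p * 1 \<le> real p * real p ^ 4" using ppos by (intro mult_left_mono) auto
    then show ?thesis by (simp add: power_Suc[symmetric] del: power_Suc)
  qed
  also have "\<dots> \<le> 7 * real p ^ 5 * real q"
  proof -
    have "1 \<le> 7 * real q" using assms(2) by simp
    then have "real p ^ 5 * 1 \<le> real p ^ 5 * (7 * real q)" by (intro mult_left_mono) auto
    then show ?thesis by (simp add: algebra_simps)
  qed
  finally have "1 / (7 * real p ^ 5 * real q) \<le> 1 / real p" using ppos assms(2) by (intro divide_left_mono) (auto intro!: mult_pos_pos)
  then have etap: "\<eta> \<le> 1 / real p" using assms(4) by linarith
  have etale1: "\<eta> \<le> 1" using etap p1 by (smt (verit) divide_le_eq_1 of_nat_1 of_nat_mono)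
  define \<epsilon> where "\<epsilon> = \<eta>^2"
  have eps0: "0 < \<epsilon>" unfolding \<epsilon>_def using assms(3) by simp
  have epsp: "\<epsilon> \<le> 1 / real p"
  proof -
    have "\<eta> * \<eta> \<le> \<eta> * 1" using etale1 assms(3) by (intro mult_left_mono) auto
    then show ?thesis using etap unfolding \<epsilon>_def by (simp add: power2_eq_square)
  qed
  define K where "K = (real (p+q) / \<epsilon>)^2"
  have K0: "K \<ge> 0" unfolding K_def by simp
  define N where "N = max (2*p+1) (nat \<lceil>(8+K) / \<eta>^2\<rceil>)"
  define a where "a = (real p - 1) / real p"
  have a_eq: "1 - 1 / real p = a" unfolding a_def using ppos by (simp add: field_simps)
  have a01: "0 \<le> a" "a \<le> 1" unfolding a_def using p1 ppos by (auto simp: field_simps)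
  show ?thesis
  proof (rule exI[of _ N], intro allI impI)
    fix n E assume nN: "N \<le> n" and H: "E \<in> extremal_family n p q \<and>
           min_degree n E = Min (min_degree n ` extremal_family n p q)"
    have adm: "admissible n p q E" and maxE: "\<And>E'. admissible n p q E' \<Longrightarrow> card E' \<le> card E"
      using H unfolding extremal_family_def by auto
    have simple: "simple_graph n E" and free: "\<not> contains_subgraph n E (p + q) (book_edges p q)"
      using adm unfolding admissible_def by auto
    have n2p: "n > 2 * p" using nN unfolding N_def by simp
    have n1: "real n \<ge> 1" using n2p by simp
    have nK: "\<eta>^2 * real n \<ge> 8 + K"
    proof -
      have "(8+K) / \<eta>^2 \<le> real (nat \<lceil>(8+K) / \<eta>^2\<rceil>)" by linarith
      also have "\<dots> \<le> real n" using nN unfolding N_def by simp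
      finally show ?thesis using assms(3) by (simp add: divide_le_eq mult.commute)
    qed
    have "admissible n p q (Econ n p)"
      unfolding admissible_def
      using Econ_simple chrom_gt[OF not_colorable[OF assms(1) n2p]] Econ_free[OF assms(1,2)] by blast
    then have cE: "card (Econ n p) \<le> card E" by (rule maxE)
    define D where "D = real (\<Sum>v<n. degree E v)"
    have "D = 2 * real (card E)" unfolding D_def using handshake[OF simple] by simp
    then have "D \<ge> (real n - 2) * (real n - real n / real p - 3)"
      using sum_con[OF assms(1) n2p] cE by (smt (verit) of_nat_mono)
    moreover have "real n - real n / real p = a * real n" unfolding a_def using ppos by (simp add: field_simps)
    ultimately have "D \<ge> (real n - 2) * (a * real n - 3)" by simp
    moreover have "(real n - 2) * (a * real n - 3) \<ge> a * real n^2 - 5 * real n"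
    proof -
      have "(real n - 2) * (a * real n - 3) = a * real n^2 - 3 * real n - 2 * a * real n + 6"
        by (simp add: algebra_simps power2_eq_square)
      moreover have "a * real n \<le> real n" using a01 n1 by (simp add: mult_le_cancel_right1)
      ultimately show ?thesis by linarith
    qed
    ultimately have Dlow: "D \<ge> a * real n^2 - 5 * real n" by linarith
    define S where "S = {v \<in> {..<n}. real (degree E v) \<le> ((real p - 1) / real p - 5 * \<eta>) * real n}"
    show "real (card {v \<in> {..<n}. real (degree E v) \<le> ((real p - 1) / real p - 5 * \<eta>) * real n}) \<le> \<eta> * real n"
      unfolding S_def[symmetric]
    proof (rule ccontr)
      assume "\<not> real (card S) \<le> \<eta> * real n"
      then have Sbig: "\<eta> * real n < real (card S)" by simp
      define k where "k = nat \<lceil>\<eta> * real n\<rceil>"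
      have kS: "k \<le> card S" unfolding k_def using Sbig
        by (simp add: nat_le_iff ceiling_le_iff)
      have k1: "real k \<ge> \<eta> * real n" unfolding k_def by linarith
      have k2: "real k \<le> \<eta> * real n + 1" unfolding k_def using assms(3) by (simp add: of_nat_nat)
      obtain T where T: "T \<subseteq> S" "card T = k" "finite T" using obtain_subset_with_card_n[OF kS] by metis
      have Tn: "T \<subseteq> {..<n}" using T(1) unfolding S_def by auto
      have Sn: "card S \<le> n" unfolding S_def by (metis (no_types, lifting) card_lessThan card_mono finite_lessThan mem_Collect_eq subsetI lessThan_iff)
      have kn: "k \<le> n" using kS Sn by simp
      define W where "W = {..<n} - T"
      have cW: "card W = n - k" unfolding W_def using Tn T(2) by (simp add: card_Diff_subset T(3))
      have cWr: "real (card W) = real n - real k" using cW kn by simp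
      have split: "(\<Sum>v<n. degree E v) \<le> (\<Sum>v\<in>W. nbr E W v) + 2 * (\<Sum>v\<in>T. degree E v)"
        using split_sum[OF simple Tn] unfolding W_def .
      define B where "B = (a - 5 * \<eta>) * real n"
      have TB: "real (\<Sum>v\<in>T. degree E v) \<le> real k * B"
      proof -
        have "real (\<Sum>v\<in>T. degree E v) = (\<Sum>v\<in>T. real (degree E v))" by simp
        also have "\<dots> \<le> (\<Sum>v\<in>T. B)"
          using T(1) unfolding S_def B_def a_def by (intro sum_mono) auto
        also have "\<dots> = real k * B" using T(2) by simp
        finally show ?thesis .
      qed
      define X where "X = real (\<Sum>v\<in>W. nbr E W v)"
      have XD: "X \<ge> D - 2 * real k * B"
      proof -
        have "D \<le> X + 2 * real (\<Sum>v\<in>T. degree E v)" unfolding D_def X_def using split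
          by (metis of_nat_add of_nat_le_iff of_nat_mult of_nat_numeral)
        then show ?thesis using TB by linarith
      qed
      have Wn: "W \<subseteq> {..<n}" unfolding W_def by auto
      have bb: "X - (a + \<epsilon>) * (real n - real k)^2 + (a + \<epsilon>) * (real n - real k) < K"
        using book_bound[OF simple free p1 assms(2) eps0 epsp Wn] unfolding X_def K_def cWr
        by (simp add: a_eq)
      show False
        using final_arith[OF a01 assms(3) etale1 \<epsilon>_def k1 k2 _ n1 nK K0 Dlow, of X] kn XD bb
        unfolding B_def by simp
    qed
  qed
qed

end
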